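(* Fix $p\in[0,1]$ and let $\alpha'>\alpha[p]$ be real. Then there exist constants $C$ and $\gamma>0$, depending on $p$, $\alpha[p]$ and $\alpha'$, such that $$\mathbb{P}_p(\overline{u}_n>\alpha' n)\le Ce^{-\gamma n}\quad\text{for all }n.$$
   Context: Let $\mathcal{L}=\{(n,m)\in\mathbb{Z}^2:n\ge0,\ n+m\text{ even}\}$. Under $\mathbb{P}_p$, each site of $\mathcal{L}$ is independently open with probability $p$ and closed otherwise. For $z,z'\in\mathcal{L}$ write $z\to z'$ if there exist $k\ge0$ and sites $z=z_0,\dots,z_k=z'$ of $\mathcal{L}$ such that $z_0,\dots,z_{k-1}$ are open and $z_{i+1}-z_i\in\{(1,1),(2,0),(1,-1)\}$ for every $i$. Use the convention $\sup\emptyset=-\infty$. Set $\overline{u}_0=0$. For $n\ge1$, let $$\overline{u}_n=\sup\{x:\exists y\le0\text{ such that }(0,y)\to(n,x)\text{ or }(1,y)\to(n,x)\},$$ where only sites of $\mathcal{L}$ are considered. Define $\alpha[p]=\inf_{n\ge1}\mathbb{E}_p[\overline{u}_n]/n\in[-\infty,1]$. *)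

theory Defs
  imports "HOL-Probability.Probability"
begin

type_synonym site = "int \<times> int"

definition lattice :: "site set" where
  "lattice = {(n, m). n \<ge> 0 \<and> even (n + m)}"

definition steps :: "site set" where
  "steps = {(1, 1), (2, 0), (1, -1)}"

text \<open>Configurations: \<open>\<omega> z\<close> means site z is open.\<close>
definition perc :: "real \<Rightarrow> (site \<Rightarrow> bool) measure" where
  "perc p = PiM lattice (\<lambda>_. measure_pmf (bernoulli_pmf p))"

inductive reach :: "(site \<Rightarrow> bool) \<Rightarrow> site \<Rightarrow> site \<Rightarrow> bool" for \<omega> where
  refl: "z \<in> lattice \<Longrightarrow> reach \<omega> z z"
| step: "z \<in> lattice \<Longrightarrow> \<omega> z \<Longrightarrow> z' - z \<in> steps \<Longrightarrow> z' \<in> lattice \<Longrightarrow> reach \<omega> z' z''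
          \<Longrightarrow> reach \<omega> z z''"

definition ubar :: "nat \<Rightarrow> (site \<Rightarrow> bool) \<Rightarrow> ereal" where
  "ubar n \<omega> = (if n = 0 then 0 else
     Sup {ereal (real_of_int x) | x. \<exists>y\<le>0.
            reach \<omega> (0, y) (int n, x) \<or> reach \<omega> (1, y) (int n, x)})"

definition expect_ereal :: "'a measure \<Rightarrow> ('a \<Rightarrow> ereal) \<Rightarrow> ereal" where
  "expect_ereal M X =
     enn2ereal (\<integral>\<^sup>+ \<omega>. e2ennreal (X \<omega>) \<partial>M) - enn2ereal (\<integral>\<^sup>+ \<omega>. e2ennreal (- X \<omega>) \<partial>M)"

definition alpha :: "real \<Rightarrow> ereal" where
  "alpha p = (INF n\<in>{1::nat..}. expect_ereal (perc p) (ubar n) / ereal (real n))"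

end

theory Submission
  imports Defs
begin


definition R :: "nat \<Rightarrow> (site \<Rightarrow> bool) \<Rightarrow> int \<Rightarrow> bool" where
  "R n \<omega> x \<longleftrightarrow> (\<exists>y\<le>0. reach \<omega> (0, y) (int n, x) \<or> reach \<omega> (1, y) (int n, x))"

definition shv :: "nat \<Rightarrow> int \<Rightarrow> (site \<Rightarrow> bool) \<Rightarrow> (site \<Rightarrow> bool)" where
  "shv n a \<omega> = restrict (\<lambda>w. \<omega> (w + (int n, a))) lattice"

lemma steps_fst: "z' - z \<in> steps \<Longrightarrow> fst z < fst z' \<and> fst z' \<le> fst z + 2"
  by (cases z; cases z'; auto simp: steps_def)
lemma steps_snd: "z' - z \<in> steps \<Longrightarrow> snd z' - snd z \<le> fst z' - fst z"
  by (cases z; cases z'; auto simp: steps_def)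

lemma reach_lattice: "reach \<omega> z z' \<Longrightarrow> z \<in> lattice \<and> z' \<in> lattice"
  by (induction rule: reach.induct) auto

lemma reach_mono: "reach \<omega> z z' \<Longrightarrow> fst z \<le> fst z' \<and> snd z' - snd z \<le> fst z' - fst z"
proof (induction rule: reach.induct)
  case (step z z' z'')
  then show ?case using steps_fst[OF step(3)] steps_snd[OF step(3)] by linarith
qed simp

lemma reach_local: "reach \<omega> z z' \<Longrightarrow> (\<And>w. w \<in> lattice \<Longrightarrow> fst w < fst z' \<Longrightarrow> \<omega> w = \<omega>' w) \<Longrightarrow> reach \<omega>' z z'"
proof (induction rule: reach.induct)
  case (refl z)
  then show ?case by (intro reach.refl)
next
  case (step z z' z'')
  have "fst z < fst z'" using steps_fst[OF step(3)] by simp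
  moreover have "fst z' \<le> fst z''" using reach_mono[OF step(5)] by simp
  ultimately have "\<omega>' z" using step.prems[OF step(1)] step(2) by auto
  have "reach \<omega>' z' z''" using step.IH step.prems \<open>fst z' \<le> fst z''\<close> by simp
  then show ?case by (rule reach.step[where \<omega>=\<omega>', OF step(1) \<open>\<omega>' z\<close> step(3) step(4)])
qed

lemma lattice_iff: "(a, b) \<in> lattice \<longleftrightarrow> a \<ge> 0 \<and> even (a + b)"
  by (simp add: lattice_def)

lemma lattice_sub: "z \<in> lattice \<Longrightarrow> fst z \<ge> int n \<Longrightarrow> even (int n + a) \<Longrightarrow> z - (int n, a) \<in> lattice"
proof -
  assume a: "z \<in> lattice" "fst z \<ge> int n" "even (int n + a)"
  obtain u v where z: "z = (u, v)" by (cases z)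
  have "even (u + v)" using a(1) z by (simp add: lattice_def)
  hence "even ((u + v) - (int n + a))" using a(3) by simp
  hence "even ((u - int n) + (v - a))" by (simp add: algebra_simps)
  thus ?thesis using a(2) z by (simp add: lattice_def)
qed

lemma reach_shift:
  assumes "reach \<omega> z z'" "fst z \<ge> int n" "even (int n + a)"
  shows "reach (shv n a \<omega>) (z - (int n, a)) (z' - (int n, a))"
  using assms
proof (induction rule: reach.induct)
  case (refl z)
  then show ?case by (intro reach.refl lattice_sub)
next
  case (step z z' z'')
  have lt: "fst z < fst z'" using steps_fst[OF step(3)] by simp
  have zl: "z - (int n, a) \<in> lattice" using step(1,7,8) by (intro lattice_sub)
  have zl': "z' - (int n, a) \<in> lattice" using step(4,7,8) lt by (intro lattice_sub) auto
  have "shv n a \<omega> (z - (int n, a))" using zl step(2) by (simp add: shv_def)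
  moreover have "(z' - (int n, a)) - (z - (int n, a)) \<in> steps" using step(3) by simp
  moreover have "reach (shv n a \<omega>) (z' - (int n, a)) (z'' - (int n, a))"
    using step.IH step(7,8) lt by simp
  ultimately show ?case using zl zl' by (metis reach.step)
qed



lemma reach_cross:
  assumes "reach \<omega> z w" "fst z \<le> k" "k \<le> fst w"
  shows "\<exists>s. reach \<omega> z (k, s) \<and> (reach \<omega> (k, s) w \<or> reach \<omega> (k + 1, s - 1) w)"
  using assms
proof (induction rule: reach.induct)
  case (refl z)
  obtain u v where z: "z = (u, v)" by (cases z)
  have "u = k" using refl z by simp
  then show ?case using refl.hyps z by (intro exI[of _ v]) (simp add: reach.refl)
next
  case (step z z' z'')
  have lt: "fst z < fst z'" "fst z' \<le> fst z + 2" using steps_fst[OF step(3)] by auto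
  have mono: "fst z' \<le> fst z''" using reach_mono[OF step(5)] by simp
  show ?case
  proof (cases "fst z' \<le> k")
    case True
    then obtain s where s: "reach \<omega> z' (k, s)" "reach \<omega> (k, s) z'' \<or> reach \<omega> (k + 1, s - 1) z''"
      using step.IH step.prems by auto
    have "reach \<omega> z (k, s)" by (rule reach.step[where \<omega>=\<omega>, OF step(1) step(2) step(3) step(4) s(1)])
    then show ?thesis using s(2) by blast
  next
    case False
    obtain a b where zab: "z = (a, b)" by (cases z)
    show ?thesis
    proof (cases "a = k")
      case True
      have r: "reach \<omega> z z''" by (rule reach.step[where \<omega>=\<omega>, OF step(1) step(2) step(3) step(4) step(5)])
      have "reach \<omega> z z" using step(1) by (rule reach.refl)
      then show ?thesis using r True zab by (intro exI[of _ b]) simp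
    next
      case False
      have ak: "a < k" using False step.prems zab by auto
      obtain c d where z': "z' = (c, d)" by (cases z')
      have "z' - z \<in> steps" by (rule step(3))
      hence "(c - a, d - b) \<in> steps" using zab z' by simp
      hence st: "c = a + 2 \<and> d = b" using \<open>\<not> fst z' \<le> k\<close> ak z' by (auto simp: steps_def)
      hence ak1: "a = k - 1" using ak \<open>\<not> fst z' \<le> k\<close> z' by auto
      have l1: "(k, b + 1) \<in> lattice" using step(1) zab ak1
        by (auto simp: lattice_def)
      have "(k, b + 1) - z \<in> steps" using zab ak1 by (simp add: steps_def)
      have "reach \<omega> z (k, b + 1)"
        by (rule reach.step[where \<omega>=\<omega>, OF step(1) step(2) \<open>(k, b + 1) - z \<in> steps\<close> l1 reach.refl[OF l1]])
      moreover have "(k + 1, b + 1 - 1) = z'" using st ak1 z' by simp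
      ultimately show ?thesis using step(5) by (intro exI[of _ "b+1"]) auto
    qed
  qed
qed

lemma R_bound: "R n \<omega> x \<Longrightarrow> x \<le> int n"
  unfolding R_def using reach_mono by fastforce

lemma R_parity: "R n \<omega> x \<Longrightarrow> even (int n + x)"
  unfolding R_def using reach_lattice by (fastforce simp: lattice_def)

lemma R_split:
  assumes "1 \<le> n" "R (n + m) \<omega> x"
  shows "\<exists>s. R n \<omega> s \<and> (\<forall>a. s \<le> a \<longrightarrow> even (int n + a) \<longrightarrow> R m (shv n a \<omega>) (x - a))"
proof -
  obtain y t where yt: "y \<le> 0" "t = 0 \<or> t = 1" "reach \<omega> (t, y) (int (n + m), x)"
    using assms(2) unfolding R_def by blast
  obtain s where s: "reach \<omega> (t, y) (int n, s)"
    "reach \<omega> (int n, s) (int (n + m), x) \<or> reach \<omega> (int n + 1, s - 1) (int (n + m), x)"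
    using reach_cross[OF yt(3), of "int n"] yt(2) assms(1) by auto
  have "R n \<omega> s" using s(1) yt unfolding R_def by blast
  moreover have "R m (shv n a \<omega>) (x - a)" if a: "s \<le> a" "even (int n + a)" for a
  proof -
    from s(2) show ?thesis
    proof
      assume r: "reach \<omega> (int n, s) (int (n + m), x)"
      have "reach (shv n a \<omega>) ((int n, s) - (int n, a)) ((int (n + m), x) - (int n, a))"
        using reach_shift[OF r _ a(2)] by simp
      hence "reach (shv n a \<omega>) (0, s - a) (int m, x - a)" by simp
      thus ?thesis unfolding R_def using a(1) by (intro exI[of _ "s - a"]) auto
    next
      assume r: "reach \<omega> (int n + 1, s - 1) (int (n + m), x)"
      have "reach (shv n a \<omega>) ((int n + 1, s - 1) - (int n, a)) ((int (n + m), x) - (int n, a))"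
        using reach_shift[OF r _ a(2)] by simp
      hence "reach (shv n a \<omega>) (1, s - 1 - a) (int m, x - a)" by simp
      thus ?thesis unfolding R_def using a(1) by (intro exI[of _ "s - 1 - a"]) auto
    qed
  qed
  ultimately show ?thesis by blast
qed

lemma ubar_eq: "1 \<le> n \<Longrightarrow> ubar n \<omega> = Sup ((\<lambda>x. ereal (real_of_int x)) ` {x. R n \<omega> x})"
  unfolding ubar_def R_def by (auto intro!: arg_cong[where f=Sup])

lemma R_max:
  assumes "R n \<omega> x0"
  shows "\<exists>a. R n \<omega> a \<and> (\<forall>x. R n \<omega> x \<longrightarrow> x \<le> a)"
proof -
  let ?S = "{x. R n \<omega> x \<and> x0 \<le> x}"
  have fin: "finite ?S" by (rule finite_subset[of _ "{x0..int n}"]) (auto dest: R_bound)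
  have ne: "x0 \<in> ?S" using assms by simp
  define a where "a = Max ?S"
  have "a \<in> ?S" unfolding a_def using fin ne by (intro Max_in) auto
  moreover have "x \<le> a" if "R n \<omega> x" for x
  proof (cases "x0 \<le> x")
    case True thus ?thesis unfolding a_def using fin that by (intro Max_ge) auto
  next
    case False thus ?thesis using \<open>a \<in> ?S\<close> by auto
  qed
  ultimately show ?thesis by blast
qed

lemma ubar_max:
  assumes "1 \<le> n" "R n \<omega> x0"
  shows "\<exists>a. R n \<omega> a \<and> ubar n \<omega> = ereal (real_of_int a) \<and> (\<forall>x. R n \<omega> x \<longrightarrow> x \<le> a)"
proof -
  obtain a where a: "R n \<omega> a" "\<forall>x. R n \<omega> x \<longrightarrow> x \<le> a" using R_max[OF assms(2)] by blast
  have "ubar n \<omega> = ereal (real_of_int a)" unfolding ubar_eq[OF assms(1)]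
    by (rule Sup_eqI) (use a in auto)
  thus ?thesis using a by blast
qed

lemma ubar_empty:
  assumes "1 \<le> n" "\<not> (\<exists>x. R n \<omega> x)"
  shows "ubar n \<omega> = -\<infinity>"
proof -
  have "Collect (R n \<omega>) = {}" using assms(2) by auto
  show ?thesis unfolding ubar_eq[OF assms(1)] \<open>Collect (R n \<omega>) = {}\<close> by (simp add: bot_ereal_def)
qed

lemma ubar_le: "ubar n \<omega> \<le> ereal (real n)"
proof (cases "n = 0")
  case True thus ?thesis by (simp add: ubar_def)
next
  case False
  hence "1 \<le> n" by simp
  show ?thesis unfolding ubar_eq[OF \<open>1 \<le> n\<close>]
    by (rule Sup_least) (auto dest!: R_bound)
qed

lemma R_le_ubar: "1 \<le> n \<Longrightarrow> R n \<omega> x \<Longrightarrow> ereal (real_of_int x) \<le> ubar n \<omega>"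
  unfolding ubar_eq by (rule Sup_upper) auto

lemma ubar_split:
  assumes "1 \<le> n" "1 \<le> m"
  shows "(ubar n \<omega> = -\<infinity> \<and> ubar (n + m) \<omega> = -\<infinity>) \<or>
         (\<exists>a. ubar n \<omega> = ereal (real_of_int a) \<and> even (int n + a) \<and>
              ubar (n + m) \<omega> \<le> ereal (real_of_int a) + ubar m (shv n a \<omega>))"
proof (cases "\<exists>x. R n \<omega> x")
  case False
  have "\<not> (\<exists>x. R (n + m) \<omega> x)" using R_split[OF assms(1)] False by blast
  thus ?thesis using ubar_empty False assms by auto
next
  case True
  then obtain a where a: "R n \<omega> a" "ubar n \<omega> = ereal (real_of_int a)" "\<forall>x. R n \<omega> x \<longrightarrow> x \<le> a"
    using ubar_max[OF assms(1)] by blast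
  have par: "even (int n + a)" using R_parity[OF a(1)] .
  have nm: "1 \<le> n + m" using assms by simp
  have "ubar (n + m) \<omega> \<le> ereal (real_of_int a) + ubar m (shv n a \<omega>)"
    unfolding ubar_eq[OF nm]
  proof (rule Sup_least)
    fix e assume "e \<in> (\<lambda>x. ereal (real_of_int x)) ` {x. R (n + m) \<omega> x}"
    then obtain x where x: "e = ereal (real_of_int x)" "R (n + m) \<omega> x" by blast
    obtain s where s: "R n \<omega> s" "\<forall>a. s \<le> a \<longrightarrow> even (int n + a) \<longrightarrow> R m (shv n a \<omega>) (x - a)"
      using R_split[OF assms(1) x(2)] by blast
    have "R m (shv n a \<omega>) (x - a)" using s a(3) par by blast
    hence "ereal (real_of_int (x - a)) \<le> ubar m (shv n a \<omega>)" by (rule R_le_ubar[OF assms(2)])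
    thus "e \<le> ereal (real_of_int a) + ubar m (shv n a \<omega>)" using x(1)
      by (cases "ubar m (shv n a \<omega>)") auto
  qed
  thus ?thesis using a par by blast
qed



abbreviation Bp :: "real \<Rightarrow> bool measure" where
  "Bp p \<equiv> measure_pmf (bernoulli_pmf p)"

abbreviation CB :: "site set \<Rightarrow> (site \<Rightarrow> bool) measure" where
  "CB I \<equiv> PiM I (\<lambda>_. count_space UNIV)"

lemma sets_PiM_Bp: "sets (PiM I (\<lambda>_. Bp p)) = sets (CB I)"
  by (rule sets_PiM_cong) simp_all

lemma pred_coord[measurable]: "Measurable.pred (CB I) (\<lambda>\<omega>. \<omega> (z::site))"
proof (cases "z \<in> I")
  case True
  show ?thesis
    using measurable_component_singleton[OF True, of "\<lambda>_. count_space (UNIV::bool set)"] by simp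
next
  case False
  have eq: "\<omega> z = undefined" if "\<omega> \<in> space (CB I)" for \<omega>
    using that False by (metis PiE_arb space_PiM)
  show ?thesis by (subst measurable_cong[OF eq]) simp_all
qed

fun reachk :: "nat \<Rightarrow> (site \<Rightarrow> bool) \<Rightarrow> site \<Rightarrow> site \<Rightarrow> bool" where
  "reachk 0 \<omega> z z' = (z \<in> lattice \<and> z = z')"
| "reachk (Suc k) \<omega> z z' = (z \<in> lattice \<and> \<omega> z \<and>
     ((z + (1,1) \<in> lattice \<and> reachk k \<omega> (z + (1,1)) z') \<or>
      (z + (2,0) \<in> lattice \<and> reachk k \<omega> (z + (2,0)) z') \<or>
      (z + (1,-1) \<in> lattice \<and> reachk k \<omega> (z + (1,-1)) z')))"

lemma steps_cases: "z' - z \<in> steps \<longleftrightarrow> z' = z + (1,1) \<or> z' = z + (2,0) \<or> z' = z + (1,-1)"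
  by (cases z; cases z'; auto simp: steps_def)

lemma reach_reachk: "reach \<omega> z z' \<longleftrightarrow> (\<exists>k. reachk k \<omega> z z')"
proof
  assume "reach \<omega> z z'"
  then show "\<exists>k. reachk k \<omega> z z'"
  proof (induction rule: reach.induct)
    case (refl z)
    then show ?case by (intro exI[of _ 0]) simp
  next
    case (step z z' z'')
    then obtain k where "reachk k \<omega> z' z''" by blast
    then show ?case using step(1-4) unfolding steps_cases by (intro exI[of _ "Suc k"]) auto
  qed
next
  assume "\<exists>k. reachk k \<omega> z z'"
  then obtain k where "reachk k \<omega> z z'" by blast
  then show "reach \<omega> z z'"
  proof (induction k arbitrary: z)
    case 0
    then show ?case by (auto intro: reach.refl)
  next
    case (Suc k)
    have s1: "z + (1,1) - z \<in> steps" "z + (2,0) - z \<in> steps" "z + (1,-1) - z \<in> steps"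
      by (simp_all add: steps_def)
    from Suc.prems have zl: "z \<in> lattice" "\<omega> z" by auto
    from Suc.prems have "(z + (1,1) \<in> lattice \<and> reachk k \<omega> (z + (1,1)) z') \<or>
      (z + (2,0) \<in> lattice \<and> reachk k \<omega> (z + (2,0)) z') \<or>
      (z + (1,-1) \<in> lattice \<and> reachk k \<omega> (z + (1,-1)) z')" by simp
    then show ?case
    proof (elim disjE conjE)
      assume "z + (1,1) \<in> lattice" "reachk k \<omega> (z + (1,1)) z'"
      thus ?case using reach.step[where \<omega>=\<omega>, OF zl s1(1)] Suc.IH by blast
    next
      assume "z + (2,0) \<in> lattice" "reachk k \<omega> (z + (2,0)) z'"
      thus ?case using reach.step[where \<omega>=\<omega>, OF zl s1(2)] Suc.IH by blast
    next
      assume "z + (1,-1) \<in> lattice" "reachk k \<omega> (z + (1,-1)) z'"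
      thus ?case using reach.step[where \<omega>=\<omega>, OF zl s1(3)] Suc.IH by blast
    qed
  qed
qed

lemma pred_reachk[measurable]: "Measurable.pred (CB I) (\<lambda>\<omega>. reachk k \<omega> z z')"
proof (induction k arbitrary: z)
  case 0
  then show ?case unfolding reachk.simps by (rule measurable_const) simp
next
  case (Suc k)
  note [measurable] = Suc
  show ?case unfolding reachk.simps by measurable
qed

lemma pred_reach[measurable]: "Measurable.pred (CB I) (\<lambda>\<omega>. reach \<omega> z z')"
  unfolding reach_reachk by measurable

lemma pred_R[measurable]: "Measurable.pred (CB I) (\<lambda>\<omega>. R n \<omega> x)"
  unfolding R_def by measurable


lemma ubar_SUP: "ubar n \<omega> = (if n = 0 then 0 else SUP x. (if R n \<omega> x then ereal (real_of_int x) else -\<infinity>))"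
proof (cases "n = 0")
  case True thus ?thesis by (simp add: ubar_def)
next
  case False
  hence n: "1 \<le> n" by simp
  have "ubar n \<omega> = (SUP x. (if R n \<omega> x then ereal (real_of_int x) else -\<infinity>))"
    unfolding ubar_eq[OF n]
  proof (rule antisym)
    show "Sup ((\<lambda>x. ereal (real_of_int x)) ` {x. R n \<omega> x}) \<le> (SUP x. (if R n \<omega> x then ereal (real_of_int x) else -\<infinity>))"
    proof (rule Sup_least)
      fix e assume "e \<in> (\<lambda>x. ereal (real_of_int x)) ` {x. R n \<omega> x}"
      then obtain x where x: "R n \<omega> x" "e = ereal (real_of_int x)" by blast
      have "e = (if R n \<omega> x then ereal (real_of_int x) else -\<infinity>)" using x by simp
      also have "\<dots> \<le> (SUP x. (if R n \<omega> x then ereal (real_of_int x) else -\<infinity>))"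
        by (rule SUP_upper) simp
      finally show "e \<le> (SUP x. (if R n \<omega> x then ereal (real_of_int x) else -\<infinity>))" .
    qed
    show "(SUP x. (if R n \<omega> x then ereal (real_of_int x) else -\<infinity>)) \<le> Sup ((\<lambda>x. ereal (real_of_int x)) ` {x. R n \<omega> x})"
      by (rule SUP_least) (auto intro: Sup_upper)
  qed
  thus ?thesis using False by simp
qed

lemma ubar_measurable_CB[measurable]: "ubar n \<in> borel_measurable (CB I)"
proof (cases "n = 0")
  case True
  thus ?thesis unfolding ubar_SUP[abs_def] by simp
next
  case False
  have eq: "ubar n = (\<lambda>\<omega>. SUP x. (if R n \<omega> x then ereal (real_of_int x) else -\<infinity>))"
    using False by (simp add: ubar_SUP[abs_def])
  show ?thesis unfolding eq by measurable
qed

lemma ubar_measurable[measurable]: "ubar n \<in> borel_measurable (PiM I (\<lambda>_. Bp p))"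
  using ubar_measurable_CB measurable_cong_sets[OF sets_PiM_Bp HOL.refl] by blast



definition Pn :: "nat \<Rightarrow> site set" where "Pn n = {z \<in> lattice. fst z < int n}"
definition Fn :: "nat \<Rightarrow> site set" where "Fn n = {z \<in> lattice. int n \<le> fst z}"

lemma prob_perc: "prob_space (perc p)"
  unfolding perc_def by (intro prob_space_PiM) (simp add: prob_space_measure_pmf)

lemma prob_PiM_Bp: "prob_space (PiM I (\<lambda>_. Bp p))"
  by (intro prob_space_PiM) (simp add: prob_space_measure_pmf)

lemma lattice_ne: "lattice \<noteq> {}"
  unfolding lattice_def by (auto intro!: exI[of _ "(0,0)"])

lemma meas_Bp_eq: "measurable (PiM I (\<lambda>_. Bp p)) (Bp p) = measurable (CB I) (count_space UNIV)"
  by (rule measurable_cong_sets) (simp_all add: sets_PiM_Bp)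

lemma rv_coord: "(\<lambda>\<omega>. \<omega> (i::site)) \<in> measurable (PiM I (\<lambda>_. Bp p)) (Bp p)"
  unfolding meas_Bp_eq by (rule pred_coord)

lemma indep_coords: "prob_space.indep_vars (perc p) (\<lambda>_. Bp p) (\<lambda>i \<omega>. \<omega> i) lattice"
proof -
  interpret prob_space "perc p" by (rule prob_perc)
  have eq1: "distr (perc p) (PiM lattice (\<lambda>_. Bp p)) (\<lambda>x. \<lambda>i\<in>lattice. x i) = perc p"
  proof -
    have "distr (perc p) (PiM lattice (\<lambda>_. Bp p)) (\<lambda>x. \<lambda>i\<in>lattice. x i)
        = distr (perc p) (PiM lattice (\<lambda>_. Bp p)) (\<lambda>x. x)"
      by (rule distr_cong) (auto simp: perc_def space_PiM PiE_def extensional_def restrict_def fun_eq_iff)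
    also have "\<dots> = perc p" unfolding perc_def by (rule distr_id)
    finally show ?thesis .
  qed
  have eq2: "PiM lattice (\<lambda>i. distr (perc p) (Bp p) (\<lambda>\<omega>. \<omega> i)) = perc p"
    unfolding perc_def
    by (rule PiM_cong) (auto intro!: distr_PiM_component simp: prob_space_measure_pmf)
  show ?thesis
    using eq1 eq2 by (subst indep_vars_iff_distr_eq_PiM) (auto simp: lattice_ne perc_def rv_coord)
qed

lemma Pn_Fn: "Pn n \<inter> Fn n = {}" "Pn n \<subseteq> lattice" "Fn n \<subseteq> lattice"
  by (auto simp: Pn_def Fn_def)

lemma indep_PF: "prob_space.indep_var (perc p) (PiM (Pn n) (\<lambda>_. Bp p)) (\<lambda>\<omega>. restrict \<omega> (Pn n))
   (PiM (Fn n) (\<lambda>_. Bp p)) (\<lambda>\<omega>. restrict \<omega> (Fn n))"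
proof -
  interpret prob_space "perc p" by (rule prob_perc)
  show ?thesis using indep_var_restrict[OF indep_coords Pn_Fn] by simp
qed

lemma distr_restrict: "J \<subseteq> lattice \<Longrightarrow> distr (perc p) (PiM J (\<lambda>_. Bp p)) (\<lambda>\<omega>. restrict \<omega> J) = PiM J (\<lambda>_. Bp p)"
  unfolding perc_def using distr_PiM_reindex[of lattice "\<lambda>_. Bp p" "\<lambda>x. x" J]
  by (auto simp: prob_space_measure_pmf)

lemma distr_shift:
  assumes "even (int n + a)"
  shows "distr (PiM (Fn n) (\<lambda>_. Bp p)) (perc p) (shv n a) = perc p"
proof -
  have "(\<lambda>w. w + (int n, a)) \<in> lattice \<rightarrow> Fn n"
  proof
    fix w assume "w \<in> lattice"
    thus "w + (int n, a) \<in> Fn n" using assms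
      by (cases w) (auto simp: Fn_def lattice_def)
  qed
  moreover have "inj_on (\<lambda>w. w + (int n, a)) lattice" by (auto simp: inj_on_def)
  ultimately show ?thesis
    unfolding perc_def shv_def[abs_def]
    using distr_PiM_reindex[of "Fn n" "\<lambda>_. Bp p" "\<lambda>w. w + (int n, a)" lattice]
    by (auto simp: prob_space_measure_pmf)
qed

lemma ubar_local:
  assumes "\<And>w. w \<in> lattice \<Longrightarrow> fst w < int n \<Longrightarrow> \<omega> w = \<omega>' w"
  shows "ubar n \<omega> = ubar n \<omega>'"
proof -
  have "R n \<omega> x \<longleftrightarrow> R n \<omega>' x" for x
  proof -
    have *: "reach \<omega>1 z (int n, x) \<Longrightarrow> (\<And>w. w \<in> lattice \<Longrightarrow> fst w < int n \<Longrightarrow> \<omega>1 w = \<omega>2 w)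
      \<Longrightarrow> reach \<omega>2 z (int n, x)" for \<omega>1 \<omega>2 z
      by (erule reach_local) simp
    show ?thesis unfolding R_def using *[of \<omega> _ \<omega>'] *[of \<omega>' _ \<omega>] assms by metis
  qed
  thus ?thesis unfolding ubar_SUP by simp
qed

lemma ubar_restrict: "ubar n (restrict \<omega> (Pn n)) = ubar n \<omega>"
  by (rule ubar_local) (simp add: Pn_def)

lemma shv_restrict: "even (int n + a) \<Longrightarrow> shv n a (restrict \<omega> (Fn n)) = shv n a \<omega>"
  unfolding shv_def by (auto simp: fun_eq_iff Fn_def lattice_def)



definition ee :: "real \<Rightarrow> ereal \<Rightarrow> ennreal" where
  "ee l x = (if x = -\<infinity> then 0 else ennreal (exp (l * real_of_ereal x)))"

lemma ee_measurable[measurable]: "ee l \<in> borel_measurable borel"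
  unfolding ee_def[abs_def] by measurable

definition phi :: "real \<Rightarrow> real \<Rightarrow> nat \<Rightarrow> ennreal" where
  "phi p l k = (\<integral>\<^sup>+ \<omega>. ee l (ubar k \<omega>) \<partial>perc p)"

lemma ee_mono: "0 \<le> l \<Longrightarrow> x \<le> y \<Longrightarrow> y \<noteq> \<infinity> \<Longrightarrow> ee l x \<le> ee l y"
  by (cases x; cases y) (auto simp: ee_def mult_left_mono)

lemma ee_add: "y \<noteq> \<infinity> \<Longrightarrow> ee l (ereal a + y) = ee l (ereal a) * ee l y"
  by (cases y) (auto simp: ee_def exp_add distrib_left ennreal_mult)

lemma ubar_cases: "1 \<le> n \<Longrightarrow> ubar n \<omega> = -\<infinity> \<or> (\<exists>a. ubar n \<omega> = ereal (real_of_int a) \<and> even (int n + a))"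
  using ubar_max[of n \<omega>] ubar_empty[of n \<omega>] R_parity by blast

lemma shv_measurable[measurable]: "shv n a \<in> measurable (PiM (Fn n) (\<lambda>_. Bp p)) (perc p)"
  unfolding shv_def[abs_def] perc_def by (intro measurable_restrict rv_coord)

lemma ee_ubar_meas: "(\<lambda>\<omega>. ee l (ubar k \<omega>)) \<in> borel_measurable (PiM I (\<lambda>_. Bp p))"
  by (rule measurable_compose[OF ubar_measurable ee_measurable])

lemma ee_ubar_shv_meas: "(\<lambda>v. ee l (ubar k (shv n a v))) \<in> borel_measurable (PiM (Fn n) (\<lambda>_. Bp p))"
  by (rule measurable_compose[OF shv_measurable ee_ubar_meas[of l k lattice p, folded perc_def]])

lemma ubar_fin: "ubar n \<omega> \<noteq> \<infinity>"
  using ubar_le[of n \<omega>] by auto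

lemma pointwise_split:
  assumes "1 \<le> n" "1 \<le> m" "0 \<le> l"
  shows "ee l (ubar (n + m) \<omega>) \<le>
    ee l (ubar n (restrict \<omega> (Pn n))) *
    ee l (ubar m (shv n \<lfloor>real_of_ereal (ubar n (restrict \<omega> (Pn n)))\<rfloor> (restrict \<omega> (Fn n))))"
proof -
  note ubar_restrict[of n \<omega>]
  from ubar_split[OF assms(1,2), of \<omega>] show ?thesis
  proof
    assume "ubar n \<omega> = - \<infinity> \<and> ubar (n + m) \<omega> = - \<infinity>"
    thus ?thesis by (simp add: ee_def)
  next
    assume "\<exists>a. ubar n \<omega> = ereal (real_of_int a) \<and> even (int n + a) \<and>
              ubar (n + m) \<omega> \<le> ereal (real_of_int a) + ubar m (shv n a \<omega>)"
    then obtain a where a: "ubar n \<omega> = ereal (real_of_int a)" "even (int n + a)"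
      "ubar (n + m) \<omega> \<le> ereal (real_of_int a) + ubar m (shv n a \<omega>)" by blast
    have "ee l (ubar (n + m) \<omega>) \<le> ee l (ereal (real_of_int a) + ubar m (shv n a \<omega>))"
      using a(3) assms(3) ubar_fin[of m "shv n a \<omega>"] by (intro ee_mono) auto
    also have "\<dots> = ee l (ereal (real_of_int a)) * ee l (ubar m (shv n a \<omega>))"
      using ubar_fin by (rule ee_add)
    finally show ?thesis using a(1,2) by (simp add: ubar_restrict shv_restrict)
  qed
qed

lemma submult:
  assumes "1 \<le> n" "1 \<le> m" "0 \<le> l"
  shows "phi p l (n + m) \<le> phi p l n * phi p l m"
proof -
  define S where "S = PiM (Pn n) (\<lambda>_. Bp p)"
  define T where "T = PiM (Fn n) (\<lambda>_. Bp p)"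
  define M where "M = perc p"
  define aa where "aa u = \<lfloor>real_of_ereal (ubar n u)\<rfloor>" for u
  define G where "G x = ee l (ubar n (fst x)) * ee l (ubar m (shv n (aa (fst x)) (snd x)))" for x
  interpret M: prob_space M unfolding M_def by (rule prob_perc)
  interpret S: prob_space S unfolding S_def by (rule prob_PiM_Bp)
  interpret T: prob_space T unfolding T_def by (rule prob_PiM_Bp)
  interpret ST: pair_sigma_finite S T ..
  have aa_meas: "(\<lambda>x. aa (fst x)) \<in> measurable (S \<Otimes>\<^sub>M T) (count_space UNIV)"
    unfolding aa_def S_def by measurable
  define F where "F i x = ee l (ubar n (fst x)) * ee l (ubar m (shv n i (snd x)))" for i x
  have F_meas: "F i \<in> borel_measurable (S \<Otimes>\<^sub>M T)" for i
  proof -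
    have h1: "(\<lambda>x. ee l (ubar n (fst x))) \<in> borel_measurable (S \<Otimes>\<^sub>M T)"
      unfolding S_def
      by (intro measurable_compose[OF measurable_compose[OF measurable_fst ubar_measurable] ee_measurable])
    have h2: "(\<lambda>x. ee l (ubar m (shv n i (snd x)))) \<in> borel_measurable (S \<Otimes>\<^sub>M T)"
      unfolding T_def
      by (intro measurable_compose[OF measurable_compose[OF measurable_compose[OF measurable_snd shv_measurable] ubar_measurable[of _ lattice p, folded perc_def]] ee_measurable])
    have "(\<lambda>x. ee l (ubar n (fst x)) * ee l (ubar m (shv n i (snd x)))) \<in> borel_measurable (S \<Otimes>\<^sub>M T)"
      using h1 h2 by (rule borel_measurable_times_ennreal)
    thus ?thesis unfolding F_def[abs_def] .
  qed
  have G_meas: "G \<in> borel_measurable (S \<Otimes>\<^sub>M T)"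
  proof -
    have "(\<lambda>x. F (aa (fst x)) x) \<in> borel_measurable (S \<Otimes>\<^sub>M T)"
      by (rule measurable_compose_countable'[OF F_meas aa_meas]) simp
    moreover have "G = (\<lambda>x. F (aa (fst x)) x)" unfolding G_def F_def by simp
    ultimately show ?thesis by simp
  qed
  have distr_pair: "distr M (S \<Otimes>\<^sub>M T) (\<lambda>\<omega>. (restrict \<omega> (Pn n), restrict \<omega> (Fn n))) = S \<Otimes>\<^sub>M T"
  proof -
    have "distr M S (\<lambda>\<omega>. restrict \<omega> (Pn n)) \<Otimes>\<^sub>M distr M T (\<lambda>\<omega>. restrict \<omega> (Fn n)) =
      distr M (S \<Otimes>\<^sub>M T) (\<lambda>\<omega>. (restrict \<omega> (Pn n), restrict \<omega> (Fn n)))"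
      using M.indep_var_distribution_eq indep_PF[of p n] unfolding M_def S_def T_def by blast
    moreover have "distr M S (\<lambda>\<omega>. restrict \<omega> (Pn n)) = S" "distr M T (\<lambda>\<omega>. restrict \<omega> (Fn n)) = T"
      unfolding M_def S_def T_def using distr_restrict[OF Pn_Fn(2)] distr_restrict[OF Pn_Fn(3)] by auto
    ultimately show ?thesis by simp
  qed
  have pair_meas: "(\<lambda>\<omega>. (restrict \<omega> (Pn n), restrict \<omega> (Fn n))) \<in> measurable M (S \<Otimes>\<^sub>M T)"
    unfolding M_def S_def T_def perc_def by (intro measurable_Pair measurable_restrict rv_coord)
  have "phi p l (n + m) \<le> (\<integral>\<^sup>+ \<omega>. G (restrict \<omega> (Pn n), restrict \<omega> (Fn n)) \<partial>M)"
    unfolding phi_def M_def G_def aa_def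
    by (intro nn_integral_mono) (simp add: pointwise_split[OF assms])
  also have "\<dots> = (\<integral>\<^sup>+ x. G x \<partial>(S \<Otimes>\<^sub>M T))"
  proof -
    have "(\<integral>\<^sup>+ \<omega>. G (restrict \<omega> (Pn n), restrict \<omega> (Fn n)) \<partial>M) =
      (\<integral>\<^sup>+ x. G x \<partial>distr M (S \<Otimes>\<^sub>M T) (\<lambda>\<omega>. (restrict \<omega> (Pn n), restrict \<omega> (Fn n))))"
      by (rule nn_integral_distr[OF pair_meas, symmetric]) (simp add: distr_pair G_meas)
    thus ?thesis by (simp add: distr_pair)
  qed
  also have "\<dots> = (\<integral>\<^sup>+ u. (\<integral>\<^sup>+ v. G (u, v) \<partial>T) \<partial>S)"
    by (rule T.nn_integral_fst[OF G_meas, symmetric])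
  also have "\<dots> = (\<integral>\<^sup>+ u. ee l (ubar n u) * phi p l m \<partial>S)"
  proof (rule nn_integral_cong)
    fix u assume "u \<in> space S"
    have inner: "(\<integral>\<^sup>+ v. ee l (ubar m (shv n (aa u) v)) \<partial>T) = phi p l m" if ne: "ubar n u \<noteq> -\<infinity>"
    proof -
      obtain a where a: "ubar n u = ereal (real_of_int a)" "even (int n + a)"
        using ubar_cases[OF assms(1), of u] ne by blast
      have "aa u = a" unfolding aa_def a(1) by simp
      have "(\<integral>\<^sup>+ v. ee l (ubar m (shv n a v)) \<partial>T) = (\<integral>\<^sup>+ w. ee l (ubar m w) \<partial>distr T M (shv n a))"
      proof -
        have em: "(\<lambda>w. ee l (ubar m w)) \<in> borel_measurable (perc p)"
          by (rule measurable_compose[OF ubar_measurable[of m lattice p, folded perc_def] ee_measurable])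
        show ?thesis unfolding T_def M_def
          by (rule nn_integral_distr[symmetric]) (simp_all add: shv_measurable em)
      qed
      also have "distr T M (shv n a) = M" unfolding T_def M_def by (rule distr_shift[OF a(2)])
      finally show ?thesis unfolding phi_def M_def \<open>aa u = a\<close> .
    qed
    have "(\<integral>\<^sup>+ v. G (u, v) \<partial>T) = ee l (ubar n u) * (\<integral>\<^sup>+ v. ee l (ubar m (shv n (aa u) v)) \<partial>T)"
      unfolding G_def fst_conv snd_conv unfolding T_def by (rule nn_integral_cmult) (rule ee_ubar_shv_meas)
    also have "\<dots> = ee l (ubar n u) * phi p l m"
      using inner by (cases "ubar n u = -\<infinity>") (simp_all add: ee_def)
    finally show "(\<integral>\<^sup>+ v. G (u, v) \<partial>T) = ee l (ubar n u) * phi p l m" .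
  qed
  also have "\<dots> = (\<integral>\<^sup>+ u. ee l (ubar n u) \<partial>S) * phi p l m"
    unfolding S_def by (rule nn_integral_multc) (rule ee_ubar_meas)
  also have "(\<integral>\<^sup>+ u. ee l (ubar n u) \<partial>S) = phi p l n"
  proof -
    have "(\<integral>\<^sup>+ u. ee l (ubar n u) \<partial>S) = (\<integral>\<^sup>+ u. ee l (ubar n u) \<partial>distr M S (\<lambda>\<omega>. restrict \<omega> (Pn n)))"
      unfolding M_def S_def using Pn_Fn by (simp add: distr_restrict)
    also have "\<dots> = (\<integral>\<^sup>+ \<omega>. ee l (ubar n (restrict \<omega> (Pn n))) \<partial>M)"
      unfolding M_def S_def perc_def by (rule nn_integral_distr) (intro measurable_restrict rv_coord, simp add: ee_ubar_meas)
    finally show ?thesis unfolding phi_def M_def by (simp add: ubar_restrict)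
  qed
  finally show ?thesis .
qed



lemma phi_le_exp: "0 \<le> l \<Longrightarrow> phi p l r \<le> ennreal (exp (l * real r))"
proof -
  assume l: "0 \<le> l"
  interpret prob_space "perc p" by (rule prob_perc)
  have "phi p l r \<le> (\<integral>\<^sup>+ \<omega>. ennreal (exp (l * real r)) \<partial>perc p)"
    unfolding phi_def
  proof (rule nn_integral_mono)
    fix \<omega>
    have "ee l (ubar r \<omega>) \<le> ee l (ereal (real r))"
      using l ubar_le[of r \<omega>] by (intro ee_mono) auto
    thus "ee l (ubar r \<omega>) \<le> ennreal (exp (l * real r))" by (simp add: ee_def)
  qed
  also have "\<dots> = ennreal (exp (l * real r))" by (simp add: emeasure_space_1)
  finally show ?thesis .
qed

lemma phi_iter:
  assumes "1 \<le> k" "0 \<le> l"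
  shows "phi p l (j * k + r) \<le> phi p l k ^ j * ennreal (exp (l * real r))"
proof (induction j)
  case 0
  then show ?case using phi_le_exp[OF assms(2)] by simp
next
  case (Suc j)
  show ?case
  proof (cases "j * k + r = 0")
    case True
    hence "j = 0" "r = 0" using assms(1) by auto
    thus ?thesis by simp
  next
    case False
    have "phi p l (Suc j * k + r) = phi p l (k + (j * k + r))" by (simp add: algebra_simps)
    also have "\<dots> \<le> phi p l k * phi p l (j * k + r)"
    proof -
      have "1 \<le> j * k + r" using False by linarith
      thus ?thesis using assms by (intro submult)
    qed
    also have "\<dots> \<le> phi p l k * (phi p l k ^ j * ennreal (exp (l * real r)))"
      by (intro mult_left_mono Suc.IH) simp
    finally show ?thesis by (simp add: algebra_simps)
  qed
qed

lemma markov: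
  assumes "0 \<le> l"
  shows "measure (perc p) {\<omega> \<in> space (perc p). ubar N \<omega> > ereal t} * exp (l * t) \<le> enn2real (phi p l N)
    \<and> phi p l N < \<infinity>"
proof -
  interpret prob_space "perc p" by (rule prob_perc)
  define A where "A = {\<omega> \<in> space (perc p). ubar N \<omega> > ereal t}"
  have A: "A \<in> sets (perc p)" unfolding A_def perc_def by measurable
  have fin: "phi p l N < \<infinity>"
    using phi_le_exp[OF assms, of p N] by (simp add: top.not_eq_extremum order_le_less_trans)
  have "ennreal (exp (l * t)) * emeasure (perc p) A = (\<integral>\<^sup>+ \<omega>. ennreal (exp (l * t)) * indicator A \<omega> \<partial>perc p)"
    using A by (simp add: nn_integral_cmult_indicator)
  also have "\<dots> \<le> phi p l N"
    unfolding phi_def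
  proof (rule nn_integral_mono)
    fix \<omega> assume "\<omega> \<in> space (perc p)"
    show "ennreal (exp (l * t)) * indicator A \<omega> \<le> ee l (ubar N \<omega>)"
    proof (cases "\<omega> \<in> A")
      case True
      hence "ereal t \<le> ubar N \<omega>" unfolding A_def by auto
      hence "ee l (ereal t) \<le> ee l (ubar N \<omega>)" using assms ubar_fin by (intro ee_mono) auto
      thus ?thesis using True by (simp add: ee_def)
    qed simp
  qed
  finally have "ennreal (exp (l * t) * measure (perc p) A) \<le> phi p l N"
    by (simp add: emeasure_eq_measure ennreal_mult)
  hence "exp (l * t) * measure (perc p) A \<le> enn2real (phi p l N)"
  proof -
    have "enn2real (ennreal (exp (l * t) * measure (perc p) A)) \<le> enn2real (phi p l N)"
      using \<open>ennreal (exp (l * t) * measure (perc p) A) \<le> phi p l N\<close> fin by (intro enn2real_mono) (auto simp: top_ennreal_def)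
    thus ?thesis by simp
  qed
  thus ?thesis using fin unfolding A_def by (simp add: mult.commute)
qed

lemma tail_from_k:
  assumes k: "1 \<le> k" and l: "0 < l" and c: "c < \<alpha>' * real k"
    and ph: "phi p l k \<le> ennreal (exp (l * c))"
  shows "\<exists>C \<gamma>::real. \<gamma> > 0 \<and> (\<forall>n::nat.
           {\<omega> \<in> space (perc p). ubar n \<omega> > ereal (\<alpha>' * real n)} \<in> sets (perc p) \<and>
           measure (perc p) {\<omega> \<in> space (perc p). ubar n \<omega> > ereal (\<alpha>' * real n)}
             \<le> C * exp (- \<gamma> * real n))"
proof -
  define \<delta> where "\<delta> = \<alpha>' * real k - c"
  have \<delta>: "0 < \<delta>" using c unfolding \<delta>_def by simp
  define \<gamma> where "\<gamma> = l * \<delta> / real k"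
  define C where "C = exp (l * (\<delta> + real k * \<bar>1 - \<alpha>'\<bar>))"
  have kpos: "0 < real k" using k by simp
  have "\<gamma> > 0" unfolding \<gamma>_def using l \<delta> kpos by simp
  moreover have "{\<omega> \<in> space (perc p). ubar n \<omega> > ereal (\<alpha>' * real n)} \<in> sets (perc p) \<and>
           measure (perc p) {\<omega> \<in> space (perc p). ubar n \<omega> > ereal (\<alpha>' * real n)}
             \<le> C * exp (- \<gamma> * real n)" for n
  proof
    show "{\<omega> \<in> space (perc p). ubar n \<omega> > ereal (\<alpha>' * real n)} \<in> sets (perc p)"
      unfolding perc_def by measurable
    define j where "j = n div k"
    define r where "r = n mod k"
    have n: "n = j * k + r" unfolding j_def r_def by simp
    have rk: "r < k" unfolding r_def using k by simp
    have "phi p l n \<le> phi p l k ^ j * ennreal (exp (l * real r))"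
      unfolding n using k l by (intro phi_iter) auto
    also have "\<dots> \<le> ennreal (exp (l * c)) ^ j * ennreal (exp (l * real r))"
      by (intro mult_right_mono power_mono ph) auto
    also have "\<dots> = ennreal (exp (l * (c * real j + real r)))"
    proof -
      have "ennreal (exp (l * c)) ^ j = ennreal (exp (l * c) ^ j)" by (simp add: ennreal_power)
      also have "exp (l * c) ^ j = exp (real j * (l * c))" by (simp add: exp_of_nat_mult)
      finally have "ennreal (exp (l * c)) ^ j * ennreal (exp (l * real r))
         = ennreal (exp (real j * (l * c)) * exp (l * real r))" by (simp add: ennreal_mult)
      also have "exp (real j * (l * c)) * exp (l * real r) = exp (l * (c * real j + real r))"
        by (simp add: exp_add[symmetric] algebra_simps)
      finally show ?thesis .
    qed
    finally have phn: "phi p l n \<le> ennreal (exp (l * (c * real j + real r)))" .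
    have mk: "measure (perc p) {\<omega> \<in> space (perc p). ubar n \<omega> > ereal (\<alpha>' * real n)} * exp (l * (\<alpha>' * real n))
       \<le> enn2real (phi p l n)" and fin: "phi p l n < \<infinity>" using markov[where l=l and p=p and N=n and t="\<alpha>' * real n"] l by auto
    have "enn2real (phi p l n) \<le> exp (l * (c * real j + real r))"
      using phn by (metis enn2real_ennreal enn2real_mono ennreal_less_top exp_ge_zero)
    with mk have m1: "measure (perc p) {\<omega> \<in> space (perc p). ubar n \<omega> > ereal (\<alpha>' * real n)}
        \<le> exp (l * (c * real j + real r)) / exp (l * (\<alpha>' * real n))"
      by (simp add: pos_le_divide_eq)
    also have "\<dots> = exp (l * (c * real j + real r - \<alpha>' * real n))"
      by (simp add: exp_diff[symmetric] algebra_simps)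
    also have "\<dots> \<le> exp (l * (\<delta> + real k * \<bar>1 - \<alpha>'\<bar>) - \<gamma> * real n)"
    proof -
      have e1: "c * real j + real r - \<alpha>' * real n = - \<delta> * real j + real r * (1 - \<alpha>')"
        unfolding n \<delta>_def by (simp add: algebra_simps)
      have e2: "\<gamma> * real n = l * (\<delta> * real j + \<delta> * real r / real k)"
        unfolding n \<gamma>_def using kpos by (simp add: field_simps)
      have i1: "real r * (1 - \<alpha>') \<le> real k * \<bar>1 - \<alpha>'\<bar>"
      proof -
        have "real r * (1 - \<alpha>') \<le> real r * \<bar>1 - \<alpha>'\<bar>" by (intro mult_left_mono) auto
        also have "\<dots> \<le> real k * \<bar>1 - \<alpha>'\<bar>" using rk by (intro mult_right_mono) auto
        finally show ?thesis .
      qed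
      have i2: "\<delta> * real r / real k \<le> \<delta>"
        using rk kpos \<delta> by (simp add: divide_le_eq)
      have "l * (c * real j + real r - \<alpha>' * real n) \<le> l * (\<delta> + real k * \<bar>1 - \<alpha>'\<bar>) - \<gamma> * real n"
      proof -
        have s: "real r * (1 - \<alpha>') + \<delta> * real r / real k \<le> \<delta> + real k * \<bar>1 - \<alpha>'\<bar>"
          using i1 i2 by linarith
        have "l * (real r * (1 - \<alpha>') + \<delta> * real r / real k) \<le> l * (\<delta> + real k * \<bar>1 - \<alpha>'\<bar>)"
          using s l by (intro mult_left_mono) auto
        moreover have "l * (- \<delta> * real j + real r * (1 - \<alpha>')) = l * (real r * (1 - \<alpha>') + \<delta> * real r / real k) - l * (\<delta> * real j + \<delta> * real r / real k)"
          by (simp add: algebra_simps)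
        ultimately show ?thesis unfolding e1 e2 by linarith
      qed
      thus ?thesis by simp
    qed
    also have "\<dots> = C * exp (- \<gamma> * real n)"
      unfolding C_def by (simp add: exp_diff exp_minus field_simps)
    finally show "measure (perc p) {\<omega> \<in> space (perc p). ubar n \<omega> > ereal (\<alpha>' * real n)}
             \<le> C * exp (- \<gamma> * real n)" .
  qed
  ultimately show ?thesis by blast
qed



lemma find_k:
  assumes "alpha p < ereal \<alpha>'"
  shows "\<exists>k\<ge>1. expect_ereal (perc p) (ubar k) < ereal (\<alpha>' * real k)"
proof -
  obtain k where k: "k \<in> {1::nat..}" "expect_ereal (perc p) (ubar k) / ereal (real k) < ereal \<alpha>'"
    using assms unfolding alpha_def INF_less_iff by blast
  have kp: "0 < real k" using k by simp
  have "expect_ereal (perc p) (ubar k) < ereal (\<alpha>' * real k)"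
  proof (cases "expect_ereal (perc p) (ubar k)")
    case (real r)
    then have "r / real k < \<alpha>'" using k(2) kp by (simp split: if_splits)
    then show ?thesis using real kp by (simp add: divide_less_eq)
  next
    case PInf
    then show ?thesis using k(2) kp by simp
  next
    case MInf
    then show ?thesis by simp
  qed
  thus ?thesis using k by auto
qed

lemma SUP_min_nat: "(SUP T::nat. min a (of_nat T)) = (a::ennreal)"
proof (cases "a = top")
  case True
  then show ?thesis by (simp add: ennreal_SUP_of_nat_eq_top)
next
  case False
  then obtain r where r: "a = ennreal r" "0 \<le> r" by (cases a) auto
  obtain T0 :: nat where "r \<le> real T0" using real_arch_simple by blast
  hence "a \<le> of_nat T0" using r by (simp add: ennreal_of_nat_eq_real_of_nat)
  show ?thesis
  proof (rule antisym)
    show "(SUP T::nat. min a (of_nat T)) \<le> a" by (rule SUP_least) simp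
    show "a \<le> (SUP T::nat. min a (of_nat T))"
      by (rule SUP_upper2[of T0]) (use \<open>a \<le> of_nat T0\<close> in simp_all)
  qed
qed

lemma trunc_exists:
  assumes E: "expect_ereal (perc p) (ubar k) < ereal c"
  shows "\<exists>T::nat. enn2real (\<integral>\<^sup>+ \<omega>. e2ennreal (ubar k \<omega>) \<partial>perc p)
     - enn2real (\<integral>\<^sup>+ \<omega>. min (e2ennreal (- ubar k \<omega>)) (of_nat T) \<partial>perc p) < c
     \<and> (\<integral>\<^sup>+ \<omega>. e2ennreal (ubar k \<omega>) \<partial>perc p) = ennreal (enn2real (\<integral>\<^sup>+ \<omega>. e2ennreal (ubar k \<omega>) \<partial>perc p))"
proof -
  interpret prob_space "perc p" by (rule prob_perc)
  define P where "P = (\<integral>\<^sup>+ \<omega>. e2ennreal (ubar k \<omega>) \<partial>perc p)"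
  define Nn where "Nn = (\<integral>\<^sup>+ \<omega>. e2ennreal (- ubar k \<omega>) \<partial>perc p)"
  define NT where "NT T = (\<integral>\<^sup>+ \<omega>. min (e2ennreal (- ubar k \<omega>)) (of_nat T) \<partial>perc p)" for T :: nat
  have "P \<le> (\<integral>\<^sup>+ \<omega>. ennreal (real k) \<partial>perc p)"
    unfolding P_def
  proof (rule nn_integral_mono)
    fix \<omega>
    have "e2ennreal (ubar k \<omega>) \<le> e2ennreal (ereal (real k))" by (rule e2ennreal_mono[OF ubar_le])
    thus "e2ennreal (ubar k \<omega>) \<le> ennreal (real k)" by simp
  qed
  also have "\<dots> = ennreal (real k)" by (simp add: emeasure_space_1)
  finally have Pfin: "P < top" using ennreal_less_top le_less_trans by blast
  define P' where "P' = enn2real P"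
  have PP: "P = ennreal P'" unfolding P'_def using Pfin by simp
  have P'0: "0 \<le> P'" unfolding P'_def by simp
  have E': "ereal P' - enn2ereal Nn < ereal c"
    using E unfolding expect_ereal_def P_def[symmetric] Nn_def[symmetric] PP enn2ereal_ennreal[OF P'0] .
  have NTfin: "NT T \<le> of_nat T" for T
  proof -
    have "NT T \<le> (\<integral>\<^sup>+ \<omega>. of_nat T \<partial>perc p)" unfolding NT_def by (rule nn_integral_mono) simp
    also have "\<dots> = of_nat T" by (simp add: emeasure_space_1)
    finally show ?thesis .
  qed
  have "\<exists>T. P' - enn2real (NT T) < c"
  proof (cases "P' < c")
    case True
    have "NT 0 = 0" unfolding NT_def by simp
    thus ?thesis using True by (intro exI[of _ 0]) simp
  next
    case False
    have lt: "ennreal (P' - c) < Nn"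
    proof (cases "Nn = top")
      case True thus ?thesis by simp
    next
      case False
      then obtain N' where N': "Nn = ennreal N'" "0 \<le> N'" by (cases Nn) auto
      have "P' - N' < c" using E' N' by simp
      thus ?thesis using N' \<open>\<not> P' < c\<close> by (simp add: ennreal_lessI)
    qed
    have "Nn = (SUP T. NT T)"
    proof -
      have "Nn = (\<integral>\<^sup>+ \<omega>. (SUP T::nat. min (e2ennreal (- ubar k \<omega>)) (of_nat T)) \<partial>perc p)"
        unfolding Nn_def SUP_min_nat ..
      also have "\<dots> = (SUP T. NT T)" unfolding NT_def
      proof (rule nn_integral_monotone_convergence_SUP)
        show "incseq (\<lambda>T \<omega>. min (e2ennreal (- ubar k \<omega>)) (of_nat T))"
          unfolding incseq_def le_fun_def
          by (intro allI impI min.mono order.refl) (simp add: of_nat_mono)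
        show "(\<lambda>\<omega>. min (e2ennreal (- ubar k \<omega>)) (of_nat T)) \<in> borel_measurable (perc p)" for T
          unfolding perc_def by measurable
      qed
      finally show ?thesis .
    qed
    with lt obtain T where T: "ennreal (P' - c) < NT T" by (auto simp: less_SUP_iff)
    have "NT T < top" using NTfin[of T] by (simp add: le_less_trans of_nat_less_top)
    then obtain q where q: "NT T = ennreal q" "0 \<le> q" by (cases "NT T") auto
    have "P' - c < q" using T q False by (simp add: ennreal_less_iff)
    thus ?thesis using q by (intro exI[of _ T]) simp
  qed
  then obtain T where T: "P' - enn2real (NT T) < c" by blast
  have "enn2real P - enn2real (NT T) < c \<and> P = ennreal (enn2real P)"
    using T PP unfolding P'_def by blast
  thus ?thesis unfolding P_def NT_def by blast
qed

lemma mgf_bound: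
  assumes k: "1 \<le> k" and E: "expect_ereal (perc p) (ubar k) < ereal c"
  shows "\<exists>l>0. phi p l k \<le> ennreal (exp (l * c))"
proof -
  interpret prob_space "perc p" by (rule prob_perc)
  obtain T :: nat where T: "enn2real (\<integral>\<^sup>+ \<omega>. e2ennreal (ubar k \<omega>) \<partial>perc p)
     - enn2real (\<integral>\<^sup>+ \<omega>. min (e2ennreal (- ubar k \<omega>)) (of_nat T) \<partial>perc p) < c"
     "(\<integral>\<^sup>+ \<omega>. e2ennreal (ubar k \<omega>) \<partial>perc p) = ennreal (enn2real (\<integral>\<^sup>+ \<omega>. e2ennreal (ubar k \<omega>) \<partial>perc p))"
    using trunc_exists[OF E] by blast
  define Y where "Y \<omega> = real_of_ereal (max (ubar k \<omega>) (ereal (- real T)))" for \<omega>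
  have Ymeas[measurable]: "Y \<in> borel_measurable (perc p)" unfolding Y_def[abs_def] perc_def by measurable
  have Ycases: "(ubar k \<omega> = -\<infinity> \<and> Y \<omega> = - real T) \<or>
      (\<exists>r. ubar k \<omega> = ereal r \<and> r \<le> real k \<and> Y \<omega> = max r (- real T))" for \<omega>
    using ubar_le[of k \<omega>] unfolding Y_def by (cases "ubar k \<omega>") (auto simp: max_def)
  have Ybd: "Y \<omega> \<in> {- real T .. real k}" for \<omega>
    using Ycases[of \<omega>] k by auto
  interpret H: interval_bounded_random_variable "perc p" Y "- real T" "real k"
    by unfold_locales (use Ybd in auto)
  have pos: "(\<integral>\<^sup>+ \<omega>. ennreal (Y \<omega>) \<partial>perc p) = (\<integral>\<^sup>+ \<omega>. e2ennreal (ubar k \<omega>) \<partial>perc p)"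
  proof (rule nn_integral_cong)
    fix \<omega>
    show "ennreal (Y \<omega>) = e2ennreal (ubar k \<omega>)"
      using Ycases[of \<omega>] by (auto simp: ennreal_neg e2ennreal_neg max_def)
  qed
  have neg: "(\<integral>\<^sup>+ \<omega>. ennreal (- Y \<omega>) \<partial>perc p) = (\<integral>\<^sup>+ \<omega>. min (e2ennreal (- ubar k \<omega>)) (of_nat T) \<partial>perc p)"
  proof (rule nn_integral_cong)
    fix \<omega>
    show "ennreal (- Y \<omega>) = min (e2ennreal (- ubar k \<omega>)) (of_nat T)"
      using Ycases[of \<omega>]
      by (auto simp: ennreal_neg max_def min_def ennreal_of_nat_eq_real_of_nat ennreal_le_iff top_unique)
  qed
  have EY: "expectation Y < c"
    using T(1) unfolding real_lebesgue_integral_def[OF H.integrable] pos neg .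
  define D where "D = real k + real T"
  have D: "1 \<le> D" unfolding D_def using k by simp
  define l where "l = 8 * (c - expectation Y) / D\<^sup>2"
  have l: "0 < l" unfolding l_def using EY D by simp
  have lD: "l\<^sup>2 * D\<^sup>2 / 8 = l * (c - expectation Y)"
    unfolding l_def using D by (simp add: power2_eq_square field_simps)
  have hoef: "(\<integral>\<^sup>+ x. ennreal (exp (l * (Y x - expectation Y))) \<partial>perc p) \<le> ennreal (exp (l\<^sup>2 * D\<^sup>2 / 8))"
    using H.Hoeffdings_lemma_nn_integral[OF l] unfolding D_def by simp
  have "phi p l k \<le> (\<integral>\<^sup>+ x. ennreal (exp (l * Y x)) \<partial>perc p)"
    unfolding phi_def
  proof (rule nn_integral_mono)
    fix \<omega>
    have "ubar k \<omega> \<le> ereal (Y \<omega>)" using Ycases[of \<omega>] by auto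
    hence "ee l (ubar k \<omega>) \<le> ee l (ereal (Y \<omega>))" using l by (intro ee_mono) auto
    thus "ee l (ubar k \<omega>) \<le> ennreal (exp (l * Y \<omega>))" by (simp add: ee_def)
  qed
  also have "\<dots> = (\<integral>\<^sup>+ x. ennreal (exp (l * expectation Y)) * ennreal (exp (l * (Y x - expectation Y))) \<partial>perc p)"
    by (rule nn_integral_cong) (simp add: ennreal_mult[symmetric] exp_add[symmetric] algebra_simps)
  also have "\<dots> = ennreal (exp (l * expectation Y)) * (\<integral>\<^sup>+ x. ennreal (exp (l * (Y x - expectation Y))) \<partial>perc p)"
    by (rule nn_integral_cmult) measurable
  also have "\<dots> \<le> ennreal (exp (l * expectation Y)) * ennreal (exp (l\<^sup>2 * D\<^sup>2 / 8))"
    by (intro mult_left_mono hoef) simp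
  also have "\<dots> = ennreal (exp (l * c))"
  proof -
    have "l * expectation Y + l\<^sup>2 * D\<^sup>2 / 8 = l * c" using lD by (simp add: algebra_simps)
    thus ?thesis by (simp add: ennreal_mult[symmetric] exp_add[symmetric])
  qed
  finally show ?thesis using l by blast
qed


theorem lemma2p5:
  fixes p \<alpha>' :: real
  assumes "0 \<le> p" and "p \<le> 1" and "alpha p < ereal \<alpha>'"
  shows "\<exists>C \<gamma>::real. \<gamma> > 0 \<and> (\<forall>n::nat.
           {\<omega> \<in> space (perc p). ubar n \<omega> > ereal (\<alpha>' * real n)} \<in> sets (perc p) \<and>
           measure (perc p) {\<omega> \<in> space (perc p). ubar n \<omega> > ereal (\<alpha>' * real n)}
             \<le> C * exp (- \<gamma> * real n))"
proof -
  obtain k where k: "1 \<le> k" "expect_ereal (perc p) (ubar k) < ereal (\<alpha>' * real k)"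
    using find_k[OF assms(3)] by blast
  obtain c where c: "expect_ereal (perc p) (ubar k) < ereal c" "ereal c < ereal (\<alpha>' * real k)"
    using ereal_dense2[OF k(2)] by blast
  obtain l where l: "0 < l" "phi p l k \<le> ennreal (exp (l * c))"
    using mgf_bound[OF k(1) c(1)] by blast
  have c': "c < \<alpha>' * real k" using c(2) by simp
  show ?thesis by (rule tail_from_k[OF k(1) l(1) c' l(2)])
qed

end
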